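(* Let $0<\lambda<1$. Let $X$ be a nonnegative infinitely divisible random variable with drift $\delta\ge0$ and Lévy measure $\nu$ on $(0,\infty)$ satisfying $\int_{(0,\infty)}(1\wedge s)\,\nu(ds)<\infty$, i.e. its Laplace transform is $E[e^{-tX}]=e^{\Psi(-t)}$, $t\ge0$, where $\Psi(t)=\delta t+\int_{(0,\infty)}(e^{st}-1)\,\nu(ds)$. Then $$E[X^{1+\lambda}]=\frac{\lambda}{\Gamma(1-\lambda)}\Big\{\delta\int_0^\infty\frac{1-e^{\Psi(-u)}}{u^{1+\lambda}}\,du+\int_{(0,\infty)}s\Big(\int_0^\infty\frac{1-e^{-us}e^{\Psi(-u)}}{u^{1+\lambda}}\,du\Big)\nu(ds)\Big\}.$$
   Context: $\Gamma$ denotes the Gamma function. *)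

theory Defs
  imports "HOL-Probability.Probability"
begin

text \<open>Laplace exponent: Psi(t) = delta t + integral over (0,infinity) of (e^(s t) - 1) nu(ds).
  The Levy measure nu is a measure on the Borel sets of the reals concentrated on (0,infinity).\<close>
definition laplace_exponent :: "real \<Rightarrow> real measure \<Rightarrow> real \<Rightarrow> real" where
  "laplace_exponent \<delta> \<nu> t = \<delta> * t + (\<integral>s. (exp (s * t) - 1) \<partial>\<nu>)"

end

theory Submission
  imports Defs
begin

lemma one_minus_exp_nn:
  assumes "0 \<le> (v::real)"
  shows "ennreal (1 - exp (-v)) = (\<integral>\<^sup>+w. ennreal (exp (-w)) * indicator {0..v} w \<partial>lborel)"
proof -
  have "((\<lambda>w. exp (-w)) has_integral ((- exp (-v)) - (- exp (-0)))) {0..v}"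
    using assms by (intro fundamental_theorem_of_calculus)
       (auto intro!: derivative_eq_intros simp flip: has_real_derivative_iff_has_vector_derivative)
  hence "((\<lambda>w. exp (-w)) has_integral (1 - exp (-v))) {0..v}" by simp
  from nn_integral_has_integral_lebesgue'[OF _ this] show ?thesis by simp
qed

lemma powr_tail_nn:
  assumes "0 < (w::real)" "0 < (lam::real)"
  shows "(\<integral>\<^sup>+v. ennreal (v powr (-1 - lam)) * indicator {w..} v \<partial>lborel) = ennreal (w powr (-lam) / lam)"
proof -
  have "((\<lambda>x. x powr (-1 - lam)) has_integral -(w powr ((-1-lam)+1)) / ((-1-lam)+1)) {w..}"
    using assms by (intro has_integral_powr_to_inf) auto
  hence "((\<lambda>x. x powr (-1 - lam)) has_integral w powr (-lam) / lam) {w..}" by simp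
  from nn_integral_has_integral_lebesgue'[OF _ this] show ?thesis by simp
qed

lemma gamma_nn:
  assumes "0 < (lam::real)" "lam < 1"
  shows "(\<integral>\<^sup>+w. ennreal (exp (-w) * w powr (-lam) / lam) * indicator {0<..} w \<partial>lborel) = ennreal (Gamma (1 - lam) / lam)"
proof -
  have "((\<lambda>t. t powr ((1 - lam) - 1) / exp t) has_integral Gamma (1-lam)) {0..}"
    using assms by (intro Gamma_integral_real) auto
  hence "((\<lambda>t. t powr ((1 - lam) - 1) / exp t / lam) has_integral Gamma (1-lam) / lam) {0..}"
    by (rule has_integral_divide)
  hence h: "((\<lambda>t. exp (-t) * t powr (-lam) / lam) has_integral Gamma (1-lam) / lam) {0..}"
    by (simp add: exp_minus field_simps)
  have "(\<integral>\<^sup>+w. ennreal (exp (-w) * w powr (-lam) / lam) * indicator {0<..} w \<partial>lborel)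
      = (\<integral>\<^sup>+w. ennreal (exp (-w) * w powr (-lam) / lam) * indicator {0..} w \<partial>lborel)"
    by (intro nn_integral_cong_AE) (use AE_lborel_singleton[of 0] in \<open>auto split: split_indicator\<close>)
  also have "\<dots> = ennreal (Gamma (1 - lam) / lam)"
    using nn_integral_has_integral_lebesgue'[OF _ h] assms by simp
  finally show ?thesis .
qed

lemma gamma_const:
  assumes "0 < (lam::real)" "lam < 1"
  shows "(\<integral>\<^sup>+v. ennreal ((1 - exp (-v)) / v powr (1 + lam)) * indicator {0<..} v \<partial>lborel) = ennreal (Gamma (1 - lam) / lam)"
proof -
  have P: "pair_sigma_finite lborel (lborel::real measure)" by (simp add: pair_sigma_finite.intro lborel.sigma_finite_measure_axioms)
  have "(\<integral>\<^sup>+v. ennreal ((1 - exp (-v)) / v powr (1 + lam)) * indicator {0<..} v \<partial>lborel)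
     = (\<integral>\<^sup>+v. (\<integral>\<^sup>+w. (if 0 \<le> w \<and> w \<le> v \<and> 0 < v then ennreal (exp (-w)) * ennreal (v powr (-1 - lam)) else 0) \<partial>lborel) \<partial>lborel)"
  proof (intro nn_integral_cong)
    fix v :: real
    show "ennreal ((1 - exp (-v)) / v powr (1 + lam)) * indicator {0<..} v =
      (\<integral>\<^sup>+w. (if 0 \<le> w \<and> w \<le> v \<and> 0 < v then ennreal (exp (-w)) * ennreal (v powr (-1 - lam)) else 0) \<partial>lborel)"
    proof (cases "0 < v")
      case True
      have "ennreal ((1 - exp (-v)) / v powr (1 + lam)) = ennreal (1 - exp (-v)) * ennreal (v powr (-1 - lam))"
      proof -
        have "v powr (-1 - lam) = 1 / v powr (1 + lam)" using True assms by (simp add: powr_minus_divide[symmetric])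
        moreover have "0 \<le> 1 - exp (-v)" using True by simp
        ultimately show ?thesis by (simp add: ennreal_mult[symmetric])
      qed
      also have "\<dots> = (\<integral>\<^sup>+w. ennreal (exp (-w)) * indicator {0..v} w \<partial>lborel) * ennreal (v powr (-1 - lam))"
        using True by (simp add: one_minus_exp_nn)
      also have "\<dots> = (\<integral>\<^sup>+w. ennreal (exp (-w)) * indicator {0..v} w * ennreal (v powr (-1 - lam)) \<partial>lborel)"
        by (simp add: nn_integral_multc)
      also have "\<dots> = (\<integral>\<^sup>+w. (if 0 \<le> w \<and> w \<le> v \<and> 0 < v then ennreal (exp (-w)) * ennreal (v powr (-1 - lam)) else 0) \<partial>lborel)"
        using True by (intro nn_integral_cong) (auto split: split_indicator)
      finally show ?thesis using True by simp
    qed simp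
  qed
  also have "\<dots> = (\<integral>\<^sup>+w. (\<integral>\<^sup>+v. (if 0 \<le> w \<and> w \<le> v \<and> 0 < v then ennreal (exp (-w)) * ennreal (v powr (-1 - lam)) else 0) \<partial>lborel) \<partial>lborel)"
    by (rule pair_sigma_finite.Fubini'[OF P]) measurable
  also have "\<dots> = (\<integral>\<^sup>+w. ennreal (exp (-w) * w powr (-lam) / lam) * indicator {0<..} w \<partial>lborel)"
  proof (intro nn_integral_cong_AE)
    show "AE w in lborel. (\<integral>\<^sup>+v. (if 0 \<le> w \<and> w \<le> v \<and> 0 < v then ennreal (exp (-w)) * ennreal (v powr (-1 - lam)) else 0) \<partial>lborel)
       = ennreal (exp (-w) * w powr (-lam) / lam) * indicator {0<..} w"
      using AE_lborel_singleton[of 0]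
    proof eventually_elim
      case (elim w)
      show ?case
      proof (cases "0 < w")
        case True
        have "(\<integral>\<^sup>+v. (if 0 \<le> w \<and> w \<le> v \<and> 0 < v then ennreal (exp (-w)) * ennreal (v powr (-1 - lam)) else 0) \<partial>lborel)
            = (\<integral>\<^sup>+v. ennreal (exp (-w)) * (ennreal (v powr (-1 - lam)) * indicator {w..} v) \<partial>lborel)"
          using True by (intro nn_integral_cong) (auto split: split_indicator)
        also have "\<dots> = ennreal (exp (-w)) * ennreal (w powr (-lam) / lam)"
          using True assms by (simp add: nn_integral_cmult powr_tail_nn)
        also have "\<dots> = ennreal (exp (-w) * w powr (-lam) / lam)"
          using assms by (simp add: ennreal_mult[symmetric])
        finally show ?thesis using True by simp
      next
        case False
        with elim have "w < 0" by simp
        thus ?thesis by simp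
      qed
    qed
  qed
  also have "\<dots> = ennreal (Gamma (1 - lam) / lam)" by (rule gamma_nn[OF assms])
  finally show ?thesis .
qed

lemma power_frac:
  assumes "0 < (lam::real)" "lam < 1" "0 \<le> (x::real)"
  shows "ennreal (x powr lam) = ennreal (lam / Gamma (1 - lam)) *
     (\<integral>\<^sup>+u. ennreal ((1 - exp (- u * x)) / u powr (1 + lam)) * indicator {0<..} u \<partial>lborel)"
proof (cases "x = 0")
  case True thus ?thesis by simp
next
  case False
  with assms have x: "0 < x" by simp
  have G: "0 < Gamma (1 - lam)" using assms by (intro Gamma_real_pos) simp
  define I where "I = (\<integral>\<^sup>+u. ennreal ((1 - exp (- u * x)) / u powr (1 + lam)) * indicator {0<..} u \<partial>lborel)"
  have "ennreal (Gamma (1 - lam) / lam) = (\<integral>\<^sup>+v. ennreal ((1 - exp (-v)) / v powr (1 + lam)) * indicator {0<..} v \<partial>lborel)"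
    using gamma_const[OF assms(1,2)] by simp
  also have "\<dots> = ennreal \<bar>x\<bar> * (\<integral>\<^sup>+u. ennreal ((1 - exp (-(0 + x * u))) / (0 + x * u) powr (1 + lam)) * indicator {0<..} (0 + x * u) \<partial>lborel)"
    by (rule nn_integral_real_affine) (use x in auto)
  also have "\<dots> = ennreal x * (\<integral>\<^sup>+u. ennreal (x powr (-1 - lam)) * (ennreal ((1 - exp (- u * x)) / u powr (1 + lam)) * indicator {0<..} u) \<partial>lborel)"
  proof -
    have "ennreal ((1 - exp (-(0 + x * u))) / (0 + x * u) powr (1 + lam)) * indicator {0<..} (0 + x * u)
       = ennreal (x powr (-1 - lam)) * (ennreal ((1 - exp (- u * x)) / u powr (1 + lam)) * indicator {0<..} u)" for u
    proof (cases "0 < u")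
      case True
      have "(1 - exp (-(0 + x * u))) / (0 + x * u) powr (1 + lam) = x powr (-1 - lam) * ((1 - exp (- u * x)) / u powr (1 + lam))"
      proof -
        have "x powr (-1 - lam) = 1 / x powr (1 + lam)" using x by (simp add: powr_minus_divide[symmetric])
        thus ?thesis using True x by (simp add: powr_mult mult.commute)
      qed
      moreover have "0 \<le> (1 - exp (- u * x)) / u powr (1 + lam)" using True x by simp
      ultimately show ?thesis using True x by (simp add: ennreal_mult[symmetric] zero_less_mult_iff)
    next
      case False
      then show ?thesis using x by (simp add: zero_less_mult_iff)
    qed
    thus ?thesis using x by simp
  qed
  also have "\<dots> = ennreal x * ennreal (x powr (-1 - lam)) * I"
    by (simp add: nn_integral_cmult I_def mult.assoc)
  also have "ennreal x * ennreal (x powr (-1 - lam)) = ennreal (x powr (- lam))"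
  proof -
    have "x powr (1 + (-1 - lam)) = x powr 1 * x powr (-1-lam)" by (rule powr_add)
    hence "x * x powr (-1 - lam) = x powr (- lam)" using x by simp
    thus ?thesis using x by (simp add: ennreal_mult[symmetric])
  qed
  finally have C: "ennreal (Gamma (1 - lam) / lam) = ennreal (x powr (- lam)) * I" .
  have "ennreal (lam / Gamma (1 - lam)) * I = ennreal (lam / Gamma (1 - lam)) * (ennreal (x powr lam) * ennreal (x powr (- lam))) * I"
    using x by (simp add: ennreal_mult[symmetric] powr_add[symmetric])
  also have "\<dots> = ennreal (x powr lam) * (ennreal (lam / Gamma (1 - lam)) * ennreal (Gamma (1 - lam) / lam))"
    by (simp add: C mult_ac)
  also have "\<dots> = ennreal (x powr lam)"
    using G assms by (simp add: ennreal_mult[symmetric] less_imp_neq[OF G, symmetric])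
  finally show ?thesis by (simp add: I_def)
qed
lemma one_minus_exp_le: "1 - exp (- (y::real)) \<le> y"
  using exp_ge_add_one_self[of "-y"] by simp

lemma hseq_zero: "(\<lambda>n. 1 / real (Suc n)) \<longlonglongrightarrow> 0"
  using LIMSEQ_inverse_real_of_nat by (simp add: inverse_eq_divide)

lemma hseq_lim: "(\<lambda>n. (1 - exp (- (1 / real (Suc n)) * y)) / (1 / real (Suc n))) \<longlonglongrightarrow> y"
proof -
  have "((\<lambda>h. 1 - exp (- h * y)) has_field_derivative y) (at 0)"
    by (auto intro!: derivative_eq_intros)
  hence d: "((\<lambda>h. ((1 - exp (- (0 + h) * y)) - (1 - exp (- 0 * y))) / h) \<longlongrightarrow> y) (at 0)"
    unfolding has_field_derivative_iff by simp
  have f: "filterlim (\<lambda>n. 1 / real (Suc n)) (at 0) sequentially"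
    unfolding filterlim_at using hseq_zero by auto
  show ?thesis using filterlim_compose[OF d f] by simp
qed

lemma bound1:
  assumes "0 < (h::real)"
  shows "ennreal (exp (- v * y) * (1 - exp (- h * y)) / h) \<le> ennreal (y * exp (- v * y))"
proof (cases "0 \<le> y")
  case True
  have "(1 - exp (- h * y)) / h \<le> y"
    using one_minus_exp_le[of "h*y"] assms by (simp add: divide_simps mult.commute)
  hence "exp (- v * y) * ((1 - exp (- h * y)) / h) \<le> exp (- v * y) * y"
    by (intro mult_left_mono) auto
  thus ?thesis by (intro ennreal_leI) (simp add: mult.commute)
next
  case False
  hence "exp (- v * y) * (1 - exp (- h * y)) / h \<le> 0"
    using assms by (intro divide_nonpos_pos mult_nonneg_nonpos) (auto simp: mult_less_0_iff mult_le_0_iff)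
  hence "ennreal (exp (- v * y) * (1 - exp (- h * y)) / h) = 0" by (rule ennreal_neg)
  thus ?thesis by simp
qed

lemma squeeze_ennreal:
  fixes a :: "nat \<Rightarrow> ennreal"
  assumes "\<And>n. a n \<le> K" "K \<le> liminf a"
  shows "a \<longlonglongrightarrow> K"
proof -
  have "limsup a \<le> K" by (rule Limsup_bounded) (use assms in auto)
  moreover have "liminf a \<le> limsup a" by (rule Liminf_le_Limsup) simp
  ultimately have "liminf a = K" "limsup a = K" using assms(2) by auto
  thus ?thesis by (simp add: tendsto_iff_Liminf_eq_Limsup)
qed

lemma fatou_lim:
  fixes f :: "nat \<Rightarrow> 'b \<Rightarrow> ennreal"
  assumes meas: "\<And>n. f n \<in> borel_measurable N"
    and lim: "\<And>x. (\<lambda>n. f n x) \<longlonglongrightarrow> g x"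
    and bnd: "\<And>n x. f n x \<le> g x"
  shows "(\<lambda>n. \<integral>\<^sup>+x. f n x \<partial>N) \<longlonglongrightarrow> (\<integral>\<^sup>+x. g x \<partial>N)"
proof (rule squeeze_ennreal)
  show "(\<integral>\<^sup>+x. f n x \<partial>N) \<le> (\<integral>\<^sup>+x. g x \<partial>N)" for n
    by (intro nn_integral_mono bnd)
  have "(\<integral>\<^sup>+x. g x \<partial>N) = (\<integral>\<^sup>+x. liminf (\<lambda>n. f n x) \<partial>N)"
    by (intro nn_integral_cong lim_imp_Liminf[symmetric] lim) simp
  also have "\<dots> \<le> liminf (\<lambda>n. \<integral>\<^sup>+x. f n x \<partial>N)"
    by (rule nn_integral_liminf[OF meas])
  finally show "(\<integral>\<^sup>+x. g x \<partial>N) \<le> liminf (\<lambda>n. \<integral>\<^sup>+x. f n x \<partial>N)" .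
qed

locale levy =
  fixes M :: "'a measure" and X :: "'a \<Rightarrow> real" and \<delta> :: real and \<nu> :: "real measure"
  assumes prob: "prob_space M"
    and rv[measurable]: "X \<in> borel_measurable M"
    and nonneg: "\<forall>x\<in>space M. 0 \<le> X x"
    and drift: "0 \<le> \<delta>"
    and nu_sets[measurable_cong]: "sets \<nu> = sets borel"
    and nu_supp: "emeasure \<nu> {..0} = 0"
    and nu_int: "(\<integral>\<^sup>+ s. ennreal (min 1 s) \<partial>\<nu>) < \<infinity>"
    and laplace: "\<forall>t\<ge>0. (\<integral>x. exp (- t * X x) \<partial>M) = exp (laplace_exponent \<delta> \<nu> (- t))"
begin

interpretation PM: prob_space M by (rule prob)

definition P :: "real \<Rightarrow> real" where "P t = - laplace_exponent \<delta> \<nu> (- t)"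
definition L :: "real \<Rightarrow> real" where "L t = exp (laplace_exponent \<delta> \<nu> (- t))"

lemma space_nu[simp]: "space \<nu> = UNIV"
  using sets_eq_imp_space_eq[OF nu_sets] by simp

lemma AE_pos: "AE s in \<nu>. 0 < s"
proof (rule AE_I')
  show "{..0} \<in> null_sets \<nu>" using nu_supp nu_sets by (auto simp: null_sets_def)
qed auto

lemma nu_min_int: "integrable \<nu> (\<lambda>s. min 1 s)"
  by (rule integrableI_nonneg) (use AE_pos nu_int in \<open>auto elim!: eventually_mono\<close>)

lemma sigma_finite_nu: "sigma_finite_measure \<nu>"
proof -
  let ?A = "range (\<lambda>n::nat. {1 / real (Suc n)..}) \<union> {{..0::real}}"
  have 1: "countable ?A" by simp
  have 2: "?A \<subseteq> sets \<nu>" by (simp add: nu_sets image_subset_iff)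
  have 3: "\<Union> ?A = space \<nu>"
  proof -
    have "x \<in> \<Union> ?A" for x :: real
    proof (cases "x \<le> 0")
      case True thus ?thesis by blast
    next
      case False
      obtain n where "1 / x < real n" using reals_Archimedean2 by blast
      hence "1 / real (Suc n) \<le> x" using False by (simp add: field_simps)
      thus ?thesis by blast
    qed
    thus ?thesis by auto
  qed
  have 4: "\<forall>a\<in>?A. emeasure \<nu> a \<noteq> \<infinity>"
  proof safe
    fix n :: nat
    have "emeasure \<nu> {1 / real (Suc n)..} = (\<integral>\<^sup>+s. indicator {1 / real (Suc n)..} s \<partial>\<nu>)"
      using nu_sets by simp
    also have "\<dots> \<le> (\<integral>\<^sup>+s. ennreal (real (Suc n)) * ennreal (min 1 s) \<partial>\<nu>)"
    proof (intro nn_integral_mono)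
      fix s :: real
      show "indicator {1 / real (Suc n)..} s \<le> ennreal (real (Suc n)) * ennreal (min 1 s)"
      proof (cases "1 / real (Suc n) \<le> s")
        case True
        hence "1 \<le> real (Suc n) * min 1 s" by (auto simp: field_simps min_def)
        hence le: "ennreal 1 \<le> ennreal (real (Suc n) * min 1 s)" by (rule ennreal_leI)
        have "0 < s" by (rule less_le_trans[OF _ True]) simp
        hence m: "ennreal (real (Suc n) * min 1 s) = ennreal (real (Suc n)) * ennreal (min 1 s)"
          by (intro ennreal_mult) auto
        have i: "indicator {1 / real (Suc n)..} s = (1::ennreal)" using True by simp
        show ?thesis unfolding i using le unfolding m ennreal_1 .
      qed simp
    qed
    also have "\<dots> = ennreal (real (Suc n)) * (\<integral>\<^sup>+s. ennreal (min 1 s) \<partial>\<nu>)"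
      by (rule nn_integral_cmult) simp
    also have "\<dots> < \<infinity>" using nu_int by (simp add: ennreal_mult_less_top)
    finally show "emeasure \<nu> {1 / real (Suc n)..} = \<infinity> \<Longrightarrow> False" by simp
  next
    show "emeasure \<nu> {..0} = \<infinity> \<Longrightarrow> False" using nu_supp by simp
  qed
  show ?thesis by standard (use 1 2 3 4 in blast)
qed

lemma int_exp: assumes "0 \<le> t" shows "integrable \<nu> (\<lambda>s. 1 - exp (- t * s))"
proof (rule Bochner_Integration.integrable_bound[where f="\<lambda>s. max 1 t * min 1 s"])
  show "integrable \<nu> (\<lambda>s. max 1 t * min 1 s)" using nu_min_int by simp
  show "AE s in \<nu>. norm (1 - exp (- t * s)) \<le> norm (max 1 t * min 1 s)"
    using AE_pos
  proof eventually_elim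
    case (elim s)
    have a: "0 \<le> 1 - exp (- t * s)" using elim assms by simp
    have b: "1 - exp (- t * s) \<le> t * s" using one_minus_exp_le[of "t * s"] by simp
    have c: "1 - exp (- t * s) \<le> 1" by simp
    have "1 - exp (- t * s) \<le> max 1 t * min 1 s"
    proof (cases "s \<le> 1")
      case True
      have "t * s \<le> max 1 t * s" using elim by (intro mult_right_mono) auto
      thus ?thesis using b True by (simp add: min_def)
    next
      case False
      thus ?thesis using c by (auto simp: min_def le_max_iff_disj)
    qed
    thus ?case using a elim by simp
  qed
qed simp

lemma P_eq: assumes "0 \<le> t" shows "P t = \<delta> * t + (\<integral>s. 1 - exp (- t * s) \<partial>\<nu>)"
proof -
  have e: "\<And>s. exp (s * - t) - 1 = - (1 - exp (- t * s))" by (simp add: mult.commute)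
  show ?thesis unfolding P_def laplace_exponent_def by (simp only: e integral_minus)
qed

lemma P_nonneg: assumes "0 \<le> t" shows "0 \<le> P t"
proof -
  have "0 \<le> (\<integral>s. 1 - exp (- t * s) \<partial>\<nu>)"
    by (rule integral_nonneg_AE) (use AE_pos assms in \<open>auto elim!: eventually_mono\<close>)
  thus ?thesis using P_eq[OF assms] drift assms by simp
qed

lemma L_P: "L t = exp (- P t)" by (simp add: L_def P_def)

lemma laplace': assumes "0 \<le> t" shows "(\<integral>x. exp (- t * X x) \<partial>M) = L t"
  using laplace assms by (simp add: L_def)

end


lemma pointwise_lim:
  "(\<lambda>n. ennreal (exp (- v * y) * (1 - exp (- (1 / real (Suc n)) * y)) / (1 / real (Suc n)))) \<longlonglongrightarrow> ennreal (y * exp (- v * y))"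
proof -
  have "(\<lambda>n. ((1 - exp (- (1 / real (Suc n)) * y)) / (1 / real (Suc n))) * exp (- v * y)) \<longlonglongrightarrow> y * exp (- v * y)"
    by (intro tendsto_mult_right hseq_lim)
  moreover have eq: "(\<lambda>n. ((1 - exp (- (1 / real (Suc n)) * y)) / (1 / real (Suc n))) * exp (- v * y)) = (\<lambda>n. exp (- v * y) * (1 - exp (- (1 / real (Suc n)) * y)) / (1 / real (Suc n)))"
    by (rule ext) (simp add: field_simps)
  ultimately have "(\<lambda>n. exp (- v * y) * (1 - exp (- (1 / real (Suc n)) * y)) / (1 / real (Suc n))) \<longlonglongrightarrow> y * exp (- v * y)"
    by (simp only: eq)
  thus ?thesis by (rule tendsto_ennrealI)
qed

context levy begin

interpretation PM: prob_space M by (rule prob)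
interpretation NU: sigma_finite_measure \<nu> by (rule sigma_finite_nu)

lemma P_tendsto0: "(\<lambda>n. P (1 / real (Suc n))) \<longlonglongrightarrow> 0"
proof -
  have "(\<lambda>n. \<integral>s. 1 - exp (- (1 / real (Suc n)) * s) \<partial>\<nu>) \<longlonglongrightarrow> (\<integral>s. 0 \<partial>\<nu>)"
  proof (rule integral_dominated_convergence[where w="\<lambda>s. min 1 s"])
    show "integrable \<nu> (\<lambda>s. min 1 s)" by (rule nu_min_int)
    show "AE s in \<nu>. (\<lambda>n. 1 - exp (- (1 / real (Suc n)) * s)) \<longlonglongrightarrow> 0"
    proof (intro AE_I2)
      fix s :: real
      have "(\<lambda>n. 1 - exp (- (1 / real (Suc n)) * s)) \<longlonglongrightarrow> 1 - exp (- 0 * s)"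
        by (intro tendsto_intros hseq_zero)
      thus "(\<lambda>n. 1 - exp (- (1 / real (Suc n)) * s)) \<longlonglongrightarrow> 0" by simp
    qed
    show "AE s in \<nu>. norm (1 - exp (- (1 / real (Suc n)) * s)) \<le> min 1 s" for n
      using AE_pos
    proof eventually_elim
      case (elim s)
      have a: "0 \<le> 1 - exp (- (1 / real (Suc n)) * s)" using elim by simp
      have b: "1 - exp (- (1 / real (Suc n)) * s) \<le> (1 / real (Suc n)) * s"
        using one_minus_exp_le[of "(1 / real (Suc n)) * s"] by simp
      have "(1 / real (Suc n)) * s \<le> 1 * s" using elim by (intro mult_right_mono) auto
      with a b show ?case by simp
    qed
  qed simp_all
  hence "(\<lambda>n. \<delta> * (1 / real (Suc n)) + (\<integral>s. 1 - exp (- (1 / real (Suc n)) * s) \<partial>\<nu>)) \<longlonglongrightarrow> \<delta> * 0 + 0"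
    by (intro tendsto_intros hseq_zero) simp
  thus ?thesis by (simp add: P_eq)
qed

lemma expX_int: assumes "0 \<le> t" shows "integrable M (\<lambda>x. exp (- t * X x))"
  by (rule PM.integrable_const_bound[where B=1]) (use nonneg assms in \<open>auto intro!: AE_I2 simp: mult_nonneg_nonneg\<close>)

lemma deriv_A:
  assumes v: "0 \<le> v"
  shows "(\<integral>\<^sup>+x. ennreal (X x * exp (- v * X x)) \<partial>M) = ennreal (L v) * (ennreal \<delta> + (\<integral>\<^sup>+s. ennreal (s * exp (- v * s)) \<partial>\<nu>))"
proof -
  define h where "h n = 1 / real (Suc n)" for n
  have hpos: "0 < h n" for n by (simp add: h_def)
  have vh: "0 \<le> v + h n" for n using v hpos[of n] by simp
  define D where "D n = P (v + h n) - P v" for n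
  define K where "K = (\<integral>\<^sup>+s. ennreal (s * exp (- v * s)) \<partial>\<nu>)"
  define a where "a n = (\<integral>\<^sup>+x. ennreal (exp (- v * X x) * (1 - exp (- h n * X x)) / h n) \<partial>M)" for n
  have lim1: "a \<longlonglongrightarrow> (\<integral>\<^sup>+x. ennreal (X x * exp (- v * X x)) \<partial>M)"
    unfolding a_def h_def
  proof (rule fatou_lim)
    show "ennreal (exp (- v * X x) * (1 - exp (- (1 / real (Suc n)) * X x)) / (1 / real (Suc n))) \<le> ennreal (X x * exp (- v * X x))" for n x
      by (rule bound1) simp
    show "(\<lambda>n. ennreal (exp (- v * X x) * (1 - exp (- (1 / real (Suc n)) * X x)) / (1 / real (Suc n)))) \<longlonglongrightarrow> ennreal (X x * exp (- v * X x))" for x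
      by (rule pointwise_lim)
  qed simp
  have a_eq: "a n = ennreal (L v * ((1 - exp (- D n)) / h n))" for n
  proof -
    have int: "integrable M (\<lambda>x. exp (- v * X x) * (1 - exp (- h n * X x)) / h n)"
    proof (rule PM.integrable_const_bound[where B="1 / h n"])
      show "AE x in M. norm (exp (- v * X x) * (1 - exp (- h n * X x)) / h n) \<le> 1 / h n"
      proof (rule AE_I2)
        fix x assume "x \<in> space M"
        hence x: "0 \<le> X x" using nonneg by auto
        have "exp (- v * X x) \<le> 1" using x v by (simp add: mult_nonneg_nonneg)
        moreover have "0 \<le> 1 - exp (- h n * X x)" "1 - exp (- h n * X x) \<le> 1"
          using x hpos[of n] by (auto simp: mult_nonneg_nonneg)
        ultimately have "exp (- v * X x) * (1 - exp (- h n * X x)) \<le> 1 * 1"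
          by (intro mult_mono) auto
        moreover have "0 \<le> exp (- v * X x) * (1 - exp (- h n * X x))"
          using \<open>0 \<le> 1 - exp (- h n * X x)\<close> by simp
        ultimately show "norm (exp (- v * X x) * (1 - exp (- h n * X x)) / h n) \<le> 1 / h n"
          using hpos[of n] by (simp add: divide_right_mono)
      qed
    qed simp
    have "a n = ennreal (\<integral>x. exp (- v * X x) * (1 - exp (- h n * X x)) / h n \<partial>M)"
      unfolding a_def
    proof (rule nn_integral_eq_integral[OF int])
      show "AE x in M. 0 \<le> exp (- v * X x) * (1 - exp (- h n * X x)) / h n"
        using nonneg hpos[of n] by (auto intro!: AE_I2 divide_nonneg_pos simp: mult_nonneg_nonneg)
    qed
    also have "(\<integral>x. exp (- v * X x) * (1 - exp (- h n * X x)) / h n \<partial>M)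
        = (\<integral>x. exp (- v * X x) - exp (- (v + h n) * X x) \<partial>M) / h n"
    proof -
      have eq: "(\<lambda>x. exp (- v * X x) * (1 - exp (- h n * X x)) / h n) = (\<lambda>x. (exp (- v * X x) - exp (- (v + h n) * X x)) / h n)"
        by (rule ext) (simp add: algebra_simps exp_add[symmetric])
      show ?thesis by (simp only: eq integral_divide_zero)
    qed
    also have "\<dots> = ((\<integral>x. exp (- v * X x) \<partial>M) - (\<integral>x. exp (- (v + h n) * X x) \<partial>M)) / h n"
      by (subst Bochner_Integration.integral_diff[OF expX_int[OF v] expX_int[OF vh]]) (rule refl)
    also have "\<dots> = (L v - L (v + h n)) / h n"
      by (simp only: laplace'[OF v] laplace'[OF vh])
    also have "L (v + h n) = L v * exp (- D n)"
      by (simp add: L_P D_def exp_add[symmetric])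
    also have "(L v - L v * exp (- D n)) / h n = L v * ((1 - exp (- D n)) / h n)"
      by (simp add: algebra_simps)
    finally show ?thesis .
  qed
  define g where "g n s = exp (- v * s) * (1 - exp (- h n * s))" for n s
  have eqg: "g n = (\<lambda>s. (1 - exp (- (v + h n) * s)) - (1 - exp (- v * s)))" for n
    by (rule ext) (simp add: g_def algebra_simps exp_add[symmetric])
  have g_int: "integrable \<nu> (g n)" for n
    unfolding eqg by (intro Bochner_Integration.integrable_diff int_exp vh v)
  have g_nn: "AE s in \<nu>. 0 \<le> g n s" for n
    using AE_pos by eventually_elim (use hpos[of n] in \<open>simp add: g_def\<close>)
  have D_eq: "D n = \<delta> * h n + (\<integral>s. g n s \<partial>\<nu>)" for n
  proof -
    have "(\<integral>s. g n s \<partial>\<nu>) = (\<integral>s. 1 - exp (- (v + h n) * s) \<partial>\<nu>) - (\<integral>s. 1 - exp (- v * s) \<partial>\<nu>)"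
      unfolding eqg by (rule Bochner_Integration.integral_diff[OF int_exp[OF vh] int_exp[OF v]])
    thus ?thesis unfolding D_def P_eq[OF vh] P_eq[OF v] by (simp add: algebra_simps)
  qed
  have Dnn: "0 \<le> D n" for n
  proof -
    have "0 \<le> (\<integral>s. g n s \<partial>\<nu>)" by (rule integral_nonneg_AE[OF g_nn])
    thus ?thesis using D_eq[of n] drift hpos[of n] by simp
  qed
  have Dle: "D n \<le> P (h n)" for n
  proof -
    have "(\<integral>s. g n s \<partial>\<nu>) \<le> (\<integral>s. 1 - exp (- h n * s) \<partial>\<nu>)"
    proof (rule integral_mono_AE[OF g_int int_exp])
      show "0 \<le> h n" using hpos[of n] by simp
      show "AE s in \<nu>. g n s \<le> 1 - exp (- h n * s)"
        using AE_pos
      proof eventually_elim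
        case (elim s)
        have "exp (- v * s) \<le> 1" using elim v by simp
        moreover have "0 \<le> 1 - exp (- h n * s)" using elim hpos[of n] by simp
        ultimately have "exp (- v * s) * (1 - exp (- h n * s)) \<le> 1 * (1 - exp (- h n * s))"
          by (intro mult_right_mono) auto
        thus ?case by (simp add: g_def)
      qed
    qed
    thus ?thesis using D_eq[of n] P_eq[of "h n"] hpos[of n] by simp
  qed
  have Dlim: "D \<longlonglongrightarrow> 0"
  proof (rule tendsto_sandwich[of "\<lambda>n. 0" D sequentially "\<lambda>n. P (h n)"])
    show "(\<lambda>n. P (h n)) \<longlonglongrightarrow> 0" unfolding h_def by (rule P_tendsto0)
  qed (use Dnn Dle in auto)
  have b_eq: "ennreal (D n / h n) = ennreal \<delta> + (\<integral>\<^sup>+s. ennreal (g n s / h n) \<partial>\<nu>)" for n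
  proof -
    have "(\<integral>\<^sup>+s. ennreal (g n s / h n) \<partial>\<nu>) = ennreal (\<integral>s. g n s / h n \<partial>\<nu>)"
    proof (rule nn_integral_eq_integral)
      show "integrable \<nu> (\<lambda>s. g n s / h n)" using g_int by simp
      show "AE s in \<nu>. 0 \<le> g n s / h n" using g_nn[of n] by eventually_elim (use hpos[of n] in simp)
    qed
    also have "(\<integral>s. g n s / h n \<partial>\<nu>) = (\<integral>s. g n s \<partial>\<nu>) / h n" by (rule integral_divide_zero)
    finally have 1: "(\<integral>\<^sup>+s. ennreal (g n s / h n) \<partial>\<nu>) = ennreal ((\<integral>s. g n s \<partial>\<nu>) / h n)" .
    have 2: "0 \<le> (\<integral>s. g n s \<partial>\<nu>) / h n" using integral_nonneg_AE[OF g_nn] hpos[of n] by simp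
    have "D n / h n = \<delta> + (\<integral>s. g n s \<partial>\<nu>) / h n" using D_eq[of n] hpos[of n] by (simp add: field_simps)
    thus ?thesis using 1 2 drift by simp
  qed
  have blim: "(\<lambda>n. ennreal (D n / h n)) \<longlonglongrightarrow> ennreal \<delta> + K"
  proof -
    have "(\<lambda>n. \<integral>\<^sup>+s. ennreal (g n s / h n) \<partial>\<nu>) \<longlonglongrightarrow> K"
      unfolding K_def g_def h_def
    proof (rule fatou_lim)
      show "ennreal (exp (- v * s) * (1 - exp (- (1 / real (Suc n)) * s)) / (1 / real (Suc n))) \<le> ennreal (s * exp (- v * s))" for n s
        by (rule bound1) simp
      show "(\<lambda>n. ennreal (exp (- v * s) * (1 - exp (- (1 / real (Suc n)) * s)) / (1 / real (Suc n)))) \<longlonglongrightarrow> ennreal (s * exp (- v * s))" for s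
        by (rule pointwise_lim)
    qed simp
    hence "(\<lambda>n. ennreal \<delta> + (\<integral>\<^sup>+s. ennreal (g n s / h n) \<partial>\<nu>)) \<longlonglongrightarrow> ennreal \<delta> + K"
      by (intro tendsto_add tendsto_const)
    thus ?thesis by (simp only: b_eq)
  qed
  define q where "q n = ennreal ((1 - exp (- D n)) / h n)" for n
  have upper: "q n \<le> ennreal (D n / h n)" for n
    unfolding q_def using one_minus_exp_le[of "D n"] hpos[of n]
    by (intro ennreal_leI divide_right_mono) auto
  have lower: "ennreal (D n / h n) * ennreal (1 / (1 + D n)) \<le> q n" for n
  proof -
    have "1 + D n \<le> exp (D n)" by (rule exp_ge_add_one_self)
    hence "exp (- D n) \<le> 1 / (1 + D n)" using Dnn[of n] by (simp add: exp_minus field_simps)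
    hence "D n / (1 + D n) \<le> 1 - exp (- D n)" using Dnn[of n] by (simp add: field_simps)
    hence "D n / (1 + D n) / h n \<le> (1 - exp (- D n)) / h n"
      using hpos[of n] by (intro divide_right_mono) auto
    moreover have "D n / h n * (1 / (1 + D n)) = D n / (1 + D n) / h n" by simp
    ultimately have "ennreal (D n / h n * (1 / (1 + D n))) \<le> q n"
      unfolding q_def by (intro ennreal_leI) (simp add: mult.commute)
    thus ?thesis using Dnn[of n] hpos[of n] by (simp add: ennreal_mult[symmetric])
  qed
  have lowlim: "(\<lambda>n. ennreal (D n / h n) * ennreal (1 / (1 + D n))) \<longlonglongrightarrow> (ennreal \<delta> + K) * ennreal (1 / (1 + 0))"
  proof (rule tendsto_mult_ennreal[OF blim])
    show "(\<lambda>n. ennreal (1 / (1 + D n))) \<longlonglongrightarrow> ennreal (1 / (1 + 0))"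
      by (intro tendsto_ennrealI tendsto_intros Dlim) simp
  qed simp
  have qlim: "q \<longlonglongrightarrow> ennreal \<delta> + K"
    by (rule tendsto_sandwich[OF _ _ _ blim, where f="\<lambda>n. ennreal (D n / h n) * ennreal (1 / (1 + D n))"])
       (use lower upper lowlim in auto)
  have Lpos: "0 < L v" by (simp add: L_def)
  have a_eq2: "a n = ennreal (L v) * q n" for n
    unfolding a_eq q_def using Lpos Dnn[of n] hpos[of n]
    by (subst ennreal_mult) auto
  have alim: "a \<longlonglongrightarrow> ennreal (L v) * (ennreal \<delta> + K)"
    unfolding a_eq2 by (rule tendsto_mult_ennreal[OF tendsto_const qlim]) (use Lpos in simp)
  show ?thesis using LIMSEQ_unique[OF lim1 alim] by (simp add: K_def)
qed

lemma P0: "P 0 = 0" using P_eq[of 0] by simp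

lemma L_le1: assumes "0 \<le> t" shows "L t \<le> 1" and "0 < L t"
  using P_nonneg[OF assms] by (auto simp: L_P)

lemma EX_eq: "(\<integral>\<^sup>+x. ennreal (X x) \<partial>M) = ennreal \<delta> + (\<integral>\<^sup>+s. ennreal s \<partial>\<nu>)"
  using deriv_A[of 0] by (simp add: L_P P0)

lemma K_fin: assumes "0 < u" shows "(\<integral>\<^sup>+s. ennreal (s * exp (- u * s)) \<partial>\<nu>) < \<infinity>"
proof -
  have "(\<integral>\<^sup>+s. ennreal (s * exp (- u * s)) \<partial>\<nu>) \<le> (\<integral>\<^sup>+s. ennreal (max 1 (1 / u)) * ennreal (min 1 s) \<partial>\<nu>)"
  proof (rule nn_integral_mono_AE)
    show "AE s in \<nu>. ennreal (s * exp (- u * s)) \<le> ennreal (max 1 (1 / u)) * ennreal (min 1 s)"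
      using AE_pos
    proof eventually_elim
      case (elim s)
      have e1: "exp (- u * s) \<le> 1" using elim assms by simp
      have "1 + u * s \<le> exp (u * s)" by (rule exp_ge_add_one_self)
      hence us: "u * s \<le> exp (u * s)" by linarith
      have "u * s * exp (- u * s) \<le> 1"
        using elim assms us by (simp add: exp_minus field_simps)
      hence e2: "s * exp (- u * s) \<le> 1 / u" using assms by (simp add: field_simps)
      have "s * exp (- u * s) \<le> max 1 (1 / u) * min 1 s"
      proof (cases "s \<le> 1")
        case True
        have "s * exp (- u * s) \<le> s * 1" using e1 elim by (intro mult_left_mono) auto
        also have "\<dots> \<le> max 1 (1 / u) * s" using mult_right_mono[of 1 "max 1 (1 / u)" s] elim by simp
        finally show ?thesis using True by (simp add: min_def)
      next
        case False
        thus ?thesis using e2 by (auto simp: min_def le_max_iff_disj)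
      qed
      thus ?case using elim by (simp add: ennreal_mult[symmetric])
    qed
  qed
  also have "\<dots> = ennreal (max 1 (1 / u)) * (\<integral>\<^sup>+s. ennreal (min 1 s) \<partial>\<nu>)"
    by (rule nn_integral_cmult) simp
  also have "\<dots> < \<infinity>" using nu_int by (simp add: ennreal_mult_less_top)
  finally show ?thesis .
qed

lemma key_u:
  assumes u: "0 < u"
  shows "(\<integral>\<^sup>+x. ennreal (X x * (1 - exp (- u * X x))) \<partial>M)
       = ennreal \<delta> * ennreal (1 - L u) + (\<integral>\<^sup>+s. ennreal (s * (1 - exp (- u * s) * L u)) \<partial>\<nu>)"
proof -
  have u0: "0 \<le> u" using u by simp
  note Lb = L_le1[OF u0]
  define K where "K = (\<integral>\<^sup>+s. ennreal (s * exp (- u * s)) \<partial>\<nu>)"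
  define E where "E = (\<integral>\<^sup>+x. ennreal (X x * (1 - exp (- u * X x))) \<partial>M)"
  define R where "R = (\<integral>\<^sup>+s. ennreal (s * (1 - exp (- u * s) * L u)) \<partial>\<nu>)"
  have Kf: "K < \<infinity>" unfolding K_def by (rule K_fin[OF u])
  have split1: "(\<integral>\<^sup>+x. ennreal (X x) \<partial>M) = E + (\<integral>\<^sup>+x. ennreal (X x * exp (- u * X x)) \<partial>M)"
  proof -
    have "(\<integral>\<^sup>+x. ennreal (X x) \<partial>M) = (\<integral>\<^sup>+x. ennreal (X x * (1 - exp (- u * X x))) + ennreal (X x * exp (- u * X x)) \<partial>M)"
    proof (rule nn_integral_cong)
      fix x assume "x \<in> space M"
      hence x: "0 \<le> X x" using nonneg by auto
      have "0 \<le> 1 - exp (- u * X x)" using x u0 by (simp add: mult_nonneg_nonneg)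
      hence "ennreal (X x * (1 - exp (- u * X x))) + ennreal (X x * exp (- u * X x)) = ennreal (X x * (1 - exp (- u * X x)) + X x * exp (- u * X x))"
        using x by (intro ennreal_plus[symmetric]) auto
      thus "ennreal (X x) = ennreal (X x * (1 - exp (- u * X x))) + ennreal (X x * exp (- u * X x))"
        by (simp add: algebra_simps)
    qed
    also have "\<dots> = E + (\<integral>\<^sup>+x. ennreal (X x * exp (- u * X x)) \<partial>M)"
      unfolding E_def by (rule nn_integral_add) auto
    finally show ?thesis .
  qed
  have split2: "(\<integral>\<^sup>+s. ennreal s \<partial>\<nu>) = R + ennreal (L u) * K"
  proof -
    have "(\<integral>\<^sup>+s. ennreal s \<partial>\<nu>) = (\<integral>\<^sup>+s. ennreal (s * (1 - exp (- u * s) * L u)) + ennreal (L u) * ennreal (s * exp (- u * s)) \<partial>\<nu>)"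
    proof (rule nn_integral_cong_AE)
      show "AE s in \<nu>. ennreal s = ennreal (s * (1 - exp (- u * s) * L u)) + ennreal (L u) * ennreal (s * exp (- u * s))"
        using AE_pos
      proof eventually_elim
        case (elim s)
        have "exp (- u * s) * L u \<le> 1 * 1" using elim u Lb by (intro mult_mono) auto
        hence a: "0 \<le> s * (1 - exp (- u * s) * L u)" using elim by simp
        have b: "0 \<le> L u * (s * exp (- u * s))" using elim Lb by simp
        have "ennreal (s * (1 - exp (- u * s) * L u)) + ennreal (L u) * ennreal (s * exp (- u * s))
            = ennreal (s * (1 - exp (- u * s) * L u) + L u * (s * exp (- u * s)))"
          using a b Lb elim by (simp add: ennreal_mult[symmetric])
        thus ?case by (simp add: algebra_simps)
      qed
    qed
    also have "\<dots> = R + ennreal (L u) * K"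
      unfolding R_def K_def by (subst nn_integral_add) (auto simp: nn_integral_cmult)
    finally show ?thesis .
  qed
  have c1: "E + ennreal (L u) * (ennreal \<delta> + K) = ennreal \<delta> + (R + ennreal (L u) * K)"
    using split1 split2 EX_eq deriv_A[OF u0] by (simp add: K_def)
  have c2: "ennreal \<delta> = ennreal \<delta> * ennreal (1 - L u) + ennreal (L u) * ennreal \<delta>"
  proof -
    have m1: "ennreal \<delta> * ennreal (1 - L u) = ennreal (\<delta> * (1 - L u))" by (rule ennreal_mult[symmetric]) (use Lb drift in auto)
    have m2: "ennreal (L u) * ennreal \<delta> = ennreal (L u * \<delta>)" by (rule ennreal_mult[symmetric]) (use Lb drift in auto)
    have p: "ennreal (\<delta> * (1 - L u)) + ennreal (L u * \<delta>) = ennreal (\<delta> * (1 - L u) + L u * \<delta>)"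
      by (rule ennreal_plus[symmetric]) (use Lb drift in auto)
    show ?thesis by (simp only: m1 m2 p) (simp add: algebra_simps)
  qed
  have c3: "ennreal \<delta> + (R + ennreal (L u) * K) = (ennreal \<delta> * ennreal (1 - L u) + R) + ennreal (L u) * (ennreal \<delta> + K)"
    by (subst c2) (simp add: algebra_simps)
  have "E + ennreal (L u) * (ennreal \<delta> + K) = (ennreal \<delta> * ennreal (1 - L u) + R) + ennreal (L u) * (ennreal \<delta> + K)"
    using c1 c3 by simp
  moreover have "ennreal (L u) * (ennreal \<delta> + K) \<noteq> \<infinity>"
    using Kf by (simp add: ennreal_mult_eq_top_iff)
  ultimately have "E = ennreal \<delta> * ennreal (1 - L u) + R"
    by (metis add.commute ennreal_add_left_cancel)
  thus ?thesis by (simp add: E_def R_def)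
qed

end

context levy begin
interpretation PM: prob_space M by (rule prob)
interpretation NU: sigma_finite_measure \<nu> by (rule sigma_finite_nu)

lemma L_meas[measurable]: "L \<in> borel_measurable borel"
  unfolding L_def laplace_exponent_def by measurable

lemma R_meas: "(\<lambda>u. \<integral>\<^sup>+s. ennreal (s * (1 - exp (- u * s) * L u)) \<partial>\<nu>) \<in> borel_measurable borel"
  by measurable

lemma X_meas: "(\<lambda>x. \<integral>\<^sup>+u. ennreal (X x * (1 - exp (- u * X x)) / u powr (1 + lam)) * indicator {0<..} u \<partial>lborel) \<in> borel_measurable M"
  by measurable
lemma main_levy:
  assumes lam: "0 < lam" "lam < 1"
  shows "(\<integral>\<^sup>+ x. ennreal (X x powr (1 + lam)) \<partial>M) =
    ennreal (lam / Gamma (1 - lam)) *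
      (ennreal \<delta> * (\<integral>\<^sup>+ u. ennreal ((1 - L u) / u powr (1 + lam)) * indicator {0<..} u \<partial>lborel)
       + (\<integral>\<^sup>+ s. ennreal s *
            (\<integral>\<^sup>+ u. ennreal ((1 - exp (- u * s) * L u) / u powr (1 + lam)) * indicator {0<..} u \<partial>lborel) \<partial>\<nu>))"
proof -
  define c where "c = ennreal (lam / Gamma (1 - lam))"
  define F where "F u x = ennreal (X x * (1 - exp (- u * X x)) / u powr (1 + lam)) * indicator {0<..} u" for u x
  define R where "R u = (\<integral>\<^sup>+s. ennreal (s * (1 - exp (- u * s) * L u)) \<partial>\<nu>)" for u
  have PS1: "pair_sigma_finite lborel M"
    by (intro pair_sigma_finite.intro lborel.sigma_finite_measure_axioms) (simp add: PM.sigma_finite_measure_axioms)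
  have PS2: "pair_sigma_finite lborel \<nu>"
    by (intro pair_sigma_finite.intro lborel.sigma_finite_measure_axioms sigma_finite_nu)
  have "(\<integral>\<^sup>+ x. ennreal (X x powr (1 + lam)) \<partial>M) = (\<integral>\<^sup>+ x. c * (\<integral>\<^sup>+u. F u x \<partial>lborel) \<partial>M)"
  proof (rule nn_integral_cong)
    fix x assume "x \<in> space M"
    hence x: "0 \<le> X x" using nonneg by auto
    have "ennreal (X x powr (1 + lam)) = ennreal (X x) * ennreal (X x powr lam)"
      using x by (simp add: powr_add ennreal_mult[symmetric])
    also have "\<dots> = ennreal (X x) * (c * (\<integral>\<^sup>+u. ennreal ((1 - exp (- u * X x)) / u powr (1 + lam)) * indicator {0<..} u \<partial>lborel))"
      unfolding c_def using power_frac[OF lam x] by simp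
    also have "\<dots> = c * (\<integral>\<^sup>+u. ennreal (X x) * (ennreal ((1 - exp (- u * X x)) / u powr (1 + lam)) * indicator {0<..} u) \<partial>lborel)"
      by (simp add: nn_integral_cmult mult_ac)
    also have "(\<integral>\<^sup>+u. ennreal (X x) * (ennreal ((1 - exp (- u * X x)) / u powr (1 + lam)) * indicator {0<..} u) \<partial>lborel) = (\<integral>\<^sup>+u. F u x \<partial>lborel)"
    proof (rule nn_integral_cong)
      fix u :: real
      show "ennreal (X x) * (ennreal ((1 - exp (- u * X x)) / u powr (1 + lam)) * indicator {0<..} u) = F u x"
      proof (cases "0 < u")
        case True
        have "0 \<le> (1 - exp (- u * X x)) / u powr (1 + lam)" using True x by simp
        thus ?thesis using True x by (simp add: F_def ennreal_mult[symmetric])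
      qed (simp add: F_def)
    qed
    finally show "ennreal (X x powr (1 + lam)) = c * (\<integral>\<^sup>+u. F u x \<partial>lborel)" .
  qed
  also have "\<dots> = c * (\<integral>\<^sup>+ x. (\<integral>\<^sup>+u. F u x \<partial>lborel) \<partial>M)"
    by (rule nn_integral_cmult) (simp add: F_def)
  also have "(\<integral>\<^sup>+ x. (\<integral>\<^sup>+u. F u x \<partial>lborel) \<partial>M) = (\<integral>\<^sup>+ u. (\<integral>\<^sup>+x. F u x \<partial>M) \<partial>lborel)"
  proof -
    have meas: "case_prod F \<in> borel_measurable (lborel \<Otimes>\<^sub>M M)" unfolding F_def by measurable
    show ?thesis using pair_sigma_finite.Fubini'[OF PS1 meas] by simp
  qed
  also have "\<dots> = (\<integral>\<^sup>+ u. ennreal \<delta> * (ennreal ((1 - L u) / u powr (1 + lam)) * indicator {0<..} u)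
                   + (\<integral>\<^sup>+s. ennreal (s * (1 - exp (- u * s) * L u)) * (ennreal (1 / u powr (1 + lam)) * indicator {0<..} u) \<partial>\<nu>) \<partial>lborel)"
  proof (rule nn_integral_cong)
    fix u :: real
    show "(\<integral>\<^sup>+x. F u x \<partial>M) = ennreal \<delta> * (ennreal ((1 - L u) / u powr (1 + lam)) * indicator {0<..} u)
                   + (\<integral>\<^sup>+s. ennreal (s * (1 - exp (- u * s) * L u)) * (ennreal (1 / u powr (1 + lam)) * indicator {0<..} u) \<partial>\<nu>)"
    proof (cases "0 < u")
      case False thus ?thesis by (simp add: F_def)
    next
      case True
      have Lb: "L u \<le> 1" "0 < L u" using L_le1[of u] True by auto
      have "(\<integral>\<^sup>+x. F u x \<partial>M) = (\<integral>\<^sup>+x. ennreal (X x * (1 - exp (- u * X x))) * ennreal (1 / u powr (1 + lam)) \<partial>M)"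
      proof (rule nn_integral_cong)
        fix x assume "x \<in> space M"
        hence x: "0 \<le> X x" using nonneg by auto
        have "0 \<le> X x * (1 - exp (- u * X x))" using x True by (simp add: mult_nonneg_nonneg)
        thus "F u x = ennreal (X x * (1 - exp (- u * X x))) * ennreal (1 / u powr (1 + lam))"
          using True by (simp add: F_def ennreal_mult[symmetric])
      qed
      also have "\<dots> = (\<integral>\<^sup>+x. ennreal (X x * (1 - exp (- u * X x))) \<partial>M) * ennreal (1 / u powr (1 + lam))"
        by (rule nn_integral_multc) simp
      also have "\<dots> = (ennreal \<delta> * ennreal (1 - L u) + R u) * ennreal (1 / u powr (1 + lam))"
        unfolding key_u[OF True] R_def ..
      also have "\<dots> = ennreal \<delta> * (ennreal ((1 - L u) / u powr (1 + lam)) * indicator {0<..} u)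
                   + R u * (ennreal (1 / u powr (1 + lam)) * indicator {0<..} u)"
        using True Lb by (simp add: distrib_right ennreal_mult[symmetric] mult.assoc)
      also have "R u * (ennreal (1 / u powr (1 + lam)) * indicator {0<..} u) = (\<integral>\<^sup>+s. ennreal (s * (1 - exp (- u * s) * L u)) * (ennreal (1 / u powr (1 + lam)) * indicator {0<..} u) \<partial>\<nu>)"
        unfolding R_def by (rule nn_integral_multc[symmetric]) simp
      finally show ?thesis .
    qed
  qed
  also have "\<dots> = ennreal \<delta> * (\<integral>\<^sup>+ u. ennreal ((1 - L u) / u powr (1 + lam)) * indicator {0<..} u \<partial>lborel)
     + (\<integral>\<^sup>+ u. (\<integral>\<^sup>+s. ennreal (s * (1 - exp (- u * s) * L u)) * (ennreal (1 / u powr (1 + lam)) * indicator {0<..} u) \<partial>\<nu>) \<partial>lborel)"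
    by (subst nn_integral_add) (auto simp: nn_integral_cmult)
  also have "(\<integral>\<^sup>+ u. (\<integral>\<^sup>+s. ennreal (s * (1 - exp (- u * s) * L u)) * (ennreal (1 / u powr (1 + lam)) * indicator {0<..} u) \<partial>\<nu>) \<partial>lborel)
      = (\<integral>\<^sup>+s. (\<integral>\<^sup>+ u. ennreal (s * (1 - exp (- u * s) * L u)) * (ennreal (1 / u powr (1 + lam)) * indicator {0<..} u) \<partial>lborel) \<partial>\<nu>)"
  proof -
    define G where "G u s = ennreal (s * (1 - exp (- u * s) * L u)) * (ennreal (1 / u powr (1 + lam)) * indicator {0<..} u)" for u s
    have meas: "case_prod G \<in> borel_measurable (lborel \<Otimes>\<^sub>M \<nu>)" unfolding G_def by measurable
    show ?thesis using pair_sigma_finite.Fubini'[OF PS2 meas] by (simp add: G_def)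
  qed
  also have "\<dots> = (\<integral>\<^sup>+ s. ennreal s *
            (\<integral>\<^sup>+ u. ennreal ((1 - exp (- u * s) * L u) / u powr (1 + lam)) * indicator {0<..} u \<partial>lborel) \<partial>\<nu>)"
  proof (rule nn_integral_cong_AE)
    show "AE s in \<nu>. (\<integral>\<^sup>+ u. ennreal (s * (1 - exp (- u * s) * L u)) * (ennreal (1 / u powr (1 + lam)) * indicator {0<..} u) \<partial>lborel)
       = ennreal s * (\<integral>\<^sup>+ u. ennreal ((1 - exp (- u * s) * L u) / u powr (1 + lam)) * indicator {0<..} u \<partial>lborel)"
      using AE_pos
    proof eventually_elim
      case (elim s)
      have "(\<integral>\<^sup>+ u. ennreal (s * (1 - exp (- u * s) * L u)) * (ennreal (1 / u powr (1 + lam)) * indicator {0<..} u) \<partial>lborel)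
          = (\<integral>\<^sup>+ u. ennreal s * (ennreal ((1 - exp (- u * s) * L u) / u powr (1 + lam)) * indicator {0<..} u) \<partial>lborel)"
      proof (rule nn_integral_cong)
        fix u :: real
        show "ennreal (s * (1 - exp (- u * s) * L u)) * (ennreal (1 / u powr (1 + lam)) * indicator {0<..} u)
            = ennreal s * (ennreal ((1 - exp (- u * s) * L u) / u powr (1 + lam)) * indicator {0<..} u)"
        proof (cases "0 < u")
          case True
          have Lb: "L u \<le> 1" "0 < L u" using L_le1[of u] True by auto
          have "exp (- u * s) * L u \<le> 1 * 1" using Lb elim True by (intro mult_mono) auto
          hence "0 \<le> 1 - exp (- u * s) * L u" by simp
          thus ?thesis using True elim by (simp add: ennreal_mult[symmetric])
        qed simp
      qed
      also have "\<dots> = ennreal s * (\<integral>\<^sup>+ u. ennreal ((1 - exp (- u * s) * L u) / u powr (1 + lam)) * indicator {0<..} u \<partial>lborel)"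
        by (rule nn_integral_cmult) simp
      finally show ?case .
    qed
  qed
  finally show ?thesis by (simp add: c_def)
qed

end
theorem proposition2p4:
  fixes M :: "'a measure" and X :: "'a \<Rightarrow> real"
    and lam \<delta> :: real and \<nu> :: "real measure"
  assumes lam_bounds: "0 < lam" "lam < 1"
    and prob: "prob_space M"
    and rv: "X \<in> borel_measurable M"
    and nonneg: "\<forall>x\<in>space M. 0 \<le> X x"
    and drift: "0 \<le> \<delta>"
    and nu_sets: "sets \<nu> = sets borel"
    and nu_supp: "emeasure \<nu> {..0} = 0"
    and nu_int: "(\<integral>\<^sup>+ s. ennreal (min 1 s) \<partial>\<nu>) < \<infinity>"
    and laplace: "\<forall>t\<ge>0. (\<integral>x. exp (- t * X x) \<partial>M) = exp (laplace_exponent \<delta> \<nu> (- t))"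
  shows "(\<integral>\<^sup>+ x. ennreal (X x powr (1 + lam)) \<partial>M) =
    ennreal (lam / Gamma (1 - lam)) *
      (ennreal \<delta> * (\<integral>\<^sup>+ u\<in>{0<..}. ennreal ((1 - exp (laplace_exponent \<delta> \<nu> (- u))) / u powr (1 + lam)) \<partial>lborel)
       + (\<integral>\<^sup>+ s. ennreal s *
            (\<integral>\<^sup>+ u\<in>{0<..}. ennreal ((1 - exp (- u * s) * exp (laplace_exponent \<delta> \<nu> (- u))) / u powr (1 + lam)) \<partial>lborel) \<partial>\<nu>))"
proof -
  interpret levy M X \<delta> \<nu>
    by (rule levy.intro) (use prob rv nonneg drift nu_sets nu_supp nu_int laplace in auto)
  show ?thesis using main_levy[OF lam_bounds] unfolding L_def .
qed

end
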